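(* Let \(X\) be a nonempty set and let \(\Phi\) be a mapping with domain \(X^{2}\). Then the following conditions are equivalent. (i) There is a totally ordered set \(Q\) such that \(\Phi\) is combinatorially similar to a \(Q\)-pseudoultrametric. (ii) There is a poset \(Q\) such that \(\Phi\) is combinatorially similar to a \(Q\)-pseudoultrametric. (iii) \(\Phi\) is symmetric, the transitive closure \(u_{\Phi}^{t}\) of \(u_{\Phi}\) is antisymmetric, there is \(a_0 \in \Phi(X^{2})\) for which \(\Phi\) is \(a_0\)-coherent, and for every triple \(\langle x_1, x_2, x_3\rangle\) of points of \(X\) there is a permutation \((i_1,i_2,i_3)\) of \((1,2,3)\) such that \(\Phi(x_{i_1}, x_{i_2}) = \Phi(x_{i_2}, x_{i_3})\). (iv) There is \(b_0 \in \Phi(X^{2})\) such that \(\Phi(x,x) = b_0\) for every \(x \in X\), the binary relation \(\preccurlyeq_{\Phi} := u_{\Phi}^{t} \cup \Delta_{\Phi(X^{2})}\) (where \(\Delta_{\Phi(X^2)}=\{\langle b,b\rangle: b\in\Phi(X^2)\}\)) is a partial order on \(\Phi(X^{2})\), \(b_0\) is the smallest element of \((\Phi(X^{2}), \preccurlyeq_{\Phi})\), and \(\Phi\) is a \(\preccurlyeq_{\Phi}\)-pseudoultrametric on \(X\).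
   Context: For a mapping \(F\) with domain \(A\), \(F(A)\) denotes its range. Let \((Q,\preccurlyeq_Q)\) be a poset with a smallest element \(q_0\) and \(Z\) a nonempty set. A mapping \(d\colon Z^2\to Q\) is a \(Q\)-pseudoultrametric (= \(\preccurlyeq_Q\)-pseudoultrametric) if \(d\) is symmetric, \(d(z,z)=q_0\) for all \(z\in Z\), and for every triple \(\langle z_1,z_2,z_3\rangle\) of points of \(Z\) there is a permutation \((i_1,i_2,i_3)\) of \((1,2,3)\) with \(d(z_{i_1},z_{i_3})\preccurlyeq_Q d(z_{i_1},z_{i_2})\) and \(d(z_{i_1},z_{i_2})=d(z_{i_2},z_{i_3})\). For nonempty sets \(X,Y\) and mappings \(\Phi\) with domain \(X^2\), \(\Psi\) with domain \(Y^2\), \(\Phi\) is combinatorially similar to \(\Psi\) if there are bijections \(f\colon \Phi(X^2)\to\Psi(Y^2)\) and \(g\colon Y\to X\) with \(\Psi(x,y)=f(\Phi(g(x),g(y)))\) for all \(x,y\in Y\). \(\Phi\) with domain \(X^2\) is strongly consistent with an equivalence relation \(R\) on \(X\) if \(\langle x_1,x_2\rangle\in R\), \(\langle x_3,x_4\rangle\in R\) imply \(\Phi(x_1,x_3)=\Phi(x_2,x_4)\); for \(a_0\in\Phi(X^2)\), \(\Phi\) is \(a_0\)-coherent if \(\Phi^{-1}(a_0)\) is an equivalence relation on \(X\) and \(\Phi\) is strongly consistent with it. For \(\Phi\) with domain \(X^2\) and \(Y=\Phi(X^2)\), \(\langle y_1,y_2\rangle\in u_\Phi\) iff \(y_1,y_2\in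 Y\) and there are \(x_1,x_2,x_3\in X\) with \(y_1=\Phi(x_1,x_3)\) and \(y_2=\Phi(x_1,x_2)=\Phi(x_2,x_3)\). The transitive closure is \(\gamma^t=\bigcup_{n\ge1}\gamma^n\) with \(\gamma^{n+1}=\gamma^n\circ\gamma\), where \(\langle x,y\rangle\in\alpha\circ\beta\) iff there is \(z\) with \(\langle x,z\rangle\in\alpha\), \(\langle z,y\rangle\in\beta\). *)

theory Defs
  imports Main
begin

definition range2 :: "'a set \<Rightarrow> ('a \<Rightarrow> 'a \<Rightarrow> 'b) \<Rightarrow> 'b set" where
  "range2 X \<Phi> = {\<Phi> x y | x y. x \<in> X \<and> y \<in> X}"

definition least_elem :: "'q set \<Rightarrow> ('q \<times> 'q) set \<Rightarrow> 'q \<Rightarrow> bool" where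
  "least_elem Q r q0 \<longleftrightarrow> q0 \<in> Q \<and> (\<forall>q\<in>Q. (q0, q) \<in> r)"

definition perm3 :: "nat \<Rightarrow> nat \<Rightarrow> nat \<Rightarrow> bool" where
  "perm3 i1 i2 i3 \<longleftrightarrow> {i1, i2, i3} = {0, 1, 2}"

definition pseudoultrametric ::
  "'q set \<Rightarrow> ('q \<times> 'q) set \<Rightarrow> 'q \<Rightarrow> 'z set \<Rightarrow> ('z \<Rightarrow> 'z \<Rightarrow> 'q) \<Rightarrow> bool" where
  "pseudoultrametric Q r q0 Z d \<longleftrightarrow>
     (\<forall>x\<in>Z. \<forall>y\<in>Z. d x y \<in> Q) \<and>
     (\<forall>x\<in>Z. \<forall>y\<in>Z. d x y = d y x) \<and>
     (\<forall>z\<in>Z. d z z = q0) \<and>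
     (\<forall>z1\<in>Z. \<forall>z2\<in>Z. \<forall>z3\<in>Z. let z = (\<lambda>i. [z1, z2, z3] ! i) in
        \<exists>i1 i2 i3. perm3 i1 i2 i3 \<and>
          (d (z i1) (z i3), d (z i1) (z i2)) \<in> r \<and>
          d (z i1) (z i2) = d (z i2) (z i3))"

definition comb_similar ::
  "'a set \<Rightarrow> ('a \<Rightarrow> 'a \<Rightarrow> 'b) \<Rightarrow> 'c set \<Rightarrow> ('c \<Rightarrow> 'c \<Rightarrow> 'd) \<Rightarrow> bool" where
  "comb_similar X \<Phi> Y \<Psi> \<longleftrightarrow>
     (\<exists>f g. bij_betw f (range2 X \<Phi>) (range2 Y \<Psi>) \<and> bij_betw g Y X \<and>
        (\<forall>x\<in>Y. \<forall>y\<in>Y. \<Psi> x y = f (\<Phi> (g x) (g y))))"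

definition strongly_consistent :: "'a set \<Rightarrow> ('a \<Rightarrow> 'a \<Rightarrow> 'b) \<Rightarrow> ('a \<times> 'a) set \<Rightarrow> bool" where
  "strongly_consistent X \<Phi> R \<longleftrightarrow>
     (\<forall>x1 x2 x3 x4. (x1, x2) \<in> R \<longrightarrow> (x3, x4) \<in> R \<longrightarrow> \<Phi> x1 x3 = \<Phi> x2 x4)"

definition coherent :: "'a set \<Rightarrow> ('a \<Rightarrow> 'a \<Rightarrow> 'b) \<Rightarrow> 'b \<Rightarrow> bool" where
  "coherent X \<Phi> a0 \<longleftrightarrow>
     (let R = {(x, y). x \<in> X \<and> y \<in> X \<and> \<Phi> x y = a0} in
       equiv X R \<and> strongly_consistent X \<Phi> R)"

definition u_rel :: "'a set \<Rightarrow> ('a \<Rightarrow> 'a \<Rightarrow> 'b) \<Rightarrow> ('b \<times> 'b) set" where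
  "u_rel X \<Phi> = {(y1, y2). y1 \<in> range2 X \<Phi> \<and> y2 \<in> range2 X \<Phi> \<and>
     (\<exists>x1\<in>X. \<exists>x2\<in>X. \<exists>x3\<in>X. y1 = \<Phi> x1 x3 \<and> y2 = \<Phi> x1 x2 \<and> \<Phi> x1 x2 = \<Phi> x2 x3)}"

definition le_Phi :: "'a set \<Rightarrow> ('a \<Rightarrow> 'a \<Rightarrow> 'b) \<Rightarrow> ('b \<times> 'b) set" where
  "le_Phi X \<Phi> = (u_rel X \<Phi>)\<^sup>+ \<union> Id_on (range2 X \<Phi>)"

definition cond_i :: "'a set \<Rightarrow> ('a \<Rightarrow> 'a \<Rightarrow> 'b) \<Rightarrow> 'c set \<Rightarrow> ('c \<Rightarrow> 'c \<Rightarrow> 'd) \<Rightarrow>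
    'd set \<Rightarrow> ('d \<times> 'd) set \<Rightarrow> 'd \<Rightarrow> bool" where
  "cond_i X \<Phi> Y d Q r q0 \<longleftrightarrow> linear_order_on Q r \<and> least_elem Q r q0 \<and>
     pseudoultrametric Q r q0 Y d \<and> comb_similar X \<Phi> Y d"

definition cond_ii :: "'a set \<Rightarrow> ('a \<Rightarrow> 'a \<Rightarrow> 'b) \<Rightarrow> 'c set \<Rightarrow> ('c \<Rightarrow> 'c \<Rightarrow> 'd) \<Rightarrow>
    'd set \<Rightarrow> ('d \<times> 'd) set \<Rightarrow> 'd \<Rightarrow> bool" where
  "cond_ii X \<Phi> Y d Q r q0 \<longleftrightarrow> partial_order_on Q r \<and> least_elem Q r q0 \<and>
     pseudoultrametric Q r q0 Y d \<and> comb_similar X \<Phi> Y d"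

definition cond_iii :: "'a set \<Rightarrow> ('a \<Rightarrow> 'a \<Rightarrow> 'b) \<Rightarrow> bool" where
  "cond_iii X \<Phi> \<longleftrightarrow>
     (\<forall>x\<in>X. \<forall>y\<in>X. \<Phi> x y = \<Phi> y x) \<and>
     antisym ((u_rel X \<Phi>)\<^sup>+) \<and>
     (\<exists>a0\<in>range2 X \<Phi>. coherent X \<Phi> a0) \<and>
     (\<forall>x1\<in>X. \<forall>x2\<in>X. \<forall>x3\<in>X. let x = (\<lambda>i. [x1, x2, x3] ! i) in
        \<exists>i1 i2 i3. perm3 i1 i2 i3 \<and> \<Phi> (x i1) (x i2) = \<Phi> (x i2) (x i3))"

definition cond_iv :: "'a set \<Rightarrow> ('a \<Rightarrow> 'a \<Rightarrow> 'b) \<Rightarrow> bool" where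
  "cond_iv X \<Phi> \<longleftrightarrow>
     (\<exists>b0\<in>range2 X \<Phi>. (\<forall>x\<in>X. \<Phi> x x = b0) \<and>
        partial_order_on (range2 X \<Phi>) (le_Phi X \<Phi>) \<and>
        least_elem (range2 X \<Phi>) (le_Phi X \<Phi>) b0 \<and>
        pseudoultrametric (range2 X \<Phi>) (le_Phi X \<Phi>) b0 X \<Phi>)"

end

theory Submission
  imports Defs
begin

lemma perm3_D: assumes "perm3 i1 i2 i3"
  shows "i1 \<in> {0,1,2}" "i2 \<in> {0,1,2}" "i3 \<in> {0,1,2}" "0 \<in> {i1,i2,i3}" "1 \<in> {i1,i2,i3}" "2 \<in> {i1,i2,i3}"
proof -
  have e: "{i1,i2,i3} = {0,1,2::nat}" using assms unfolding perm3_def .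
  show "i1 \<in> {0,1,2}" "i2 \<in> {0,1,2}" "i3 \<in> {0,1,2}"
    by (simp_all only: e[symmetric]) simp_all
  show "0 \<in> {i1,i2,i3}" "1 \<in> {i1,i2,i3}" "2 \<in> {i1,i2,i3}"
    by (simp_all only: e) simp_all
qed

lemma perm3_lt: "perm3 i1 i2 i3 \<Longrightarrow> i1 < 3 \<and> i2 < 3 \<and> i3 < 3"
  using perm3_D(1-3)[of i1 i2 i3] by auto

lemma nth3_in: "i < 3 \<Longrightarrow> [a,b,c] ! i \<in> {a,b,c}"
  using nth_mem[of i "[a,b,c]"] by simp

lemma ex_perm3: "(\<exists>i1 i2 i3. perm3 i1 i2 i3 \<and> P i1 i2 i3) \<longleftrightarrow>
   P 0 1 2 \<or> P 0 2 1 \<or> P 1 0 2 \<or> P 1 2 0 \<or> P 2 0 1 \<or> P 2 1 0"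
proof
  assume "\<exists>i1 i2 i3. perm3 i1 i2 i3 \<and> P i1 i2 i3"
  then obtain i1 i2 i3 where p: "perm3 i1 i2 i3" and P: "P i1 i2 i3" by blast
  have "(i1,i2,i3) \<in> {(0,1,2),(0,2,1),(1,0,2),(1,2,0),(2,0,1),(2,1,0)}"
    using perm3_D[OF p] by auto
  then show "P 0 1 2 \<or> P 0 2 1 \<or> P 1 0 2 \<or> P 1 2 0 \<or> P 2 0 1 \<or> P 2 1 0" using P by auto
next
  assume "P 0 1 2 \<or> P 0 2 1 \<or> P 1 0 2 \<or> P 1 2 0 \<or> P 2 0 1 \<or> P 2 1 0"
  then show "\<exists>i1 i2 i3. perm3 i1 i2 i3 \<and> P i1 i2 i3"
    unfolding perm3_def by (elim disjE) (rule exI[of _ 0] exI[of _ 1] exI[of _ 2], auto)+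
qed

lemma tri:
  assumes pu: "pseudoultrametric Q r q0 Z d" and a: "a \<in> Z" and b: "b \<in> Z" and c: "c \<in> Z"
  shows "((d a b, d a c) \<in> r \<and> d a c = d b c) \<or> ((d a c, d a b) \<in> r \<and> d a b = d b c)
       \<or> ((d b c, d a b) \<in> r \<and> d a b = d a c)"
proof -
  have sym: "\<forall>x\<in>Z. \<forall>y\<in>Z. d x y = d y x" using pu unfolding pseudoultrametric_def by blast
  have "let z = (\<lambda>i. [a, b, c] ! i) in
        \<exists>i1 i2 i3. perm3 i1 i2 i3 \<and>
          (d (z i1) (z i3), d (z i1) (z i2)) \<in> r \<and> d (z i1) (z i2) = d (z i2) (z i3)"
    using pu a b c unfolding pseudoultrametric_def by blast
  then have "let z = (\<lambda>i. [a, b, c] ! i) in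
     ((d (z 0) (z 2), d (z 0) (z 1)) \<in> r \<and> d (z 0) (z 1) = d (z 1) (z 2)) \<or>
     ((d (z 0) (z 1), d (z 0) (z 2)) \<in> r \<and> d (z 0) (z 2) = d (z 2) (z 1)) \<or>
     ((d (z 1) (z 2), d (z 1) (z 0)) \<in> r \<and> d (z 1) (z 0) = d (z 0) (z 2)) \<or>
     ((d (z 1) (z 0), d (z 1) (z 2)) \<in> r \<and> d (z 1) (z 2) = d (z 2) (z 0)) \<or>
     ((d (z 2) (z 1), d (z 2) (z 0)) \<in> r \<and> d (z 2) (z 0) = d (z 0) (z 1)) \<or>
     ((d (z 2) (z 0), d (z 2) (z 1)) \<in> r \<and> d (z 2) (z 1) = d (z 1) (z 0))"
    unfolding Let_def ex_perm3 by simp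
  then have "((d a c, d a b) \<in> r \<and> d a b = d b c) \<or>
     ((d a b, d a c) \<in> r \<and> d a c = d c b) \<or>
     ((d b c, d b a) \<in> r \<and> d b a = d a c) \<or>
     ((d b a, d b c) \<in> r \<and> d b c = d c a) \<or>
     ((d c b, d c a) \<in> r \<and> d c a = d a b) \<or>
     ((d c a, d c b) \<in> r \<and> d c b = d b a)"
    by (simp add: Let_def numeral_2_eq_2)
  then show ?thesis using sym a b c by metis
qed

lemma pu_zero:
  assumes pu: "pseudoultrametric Q r q0 Z d" and an: "antisym r" and le: "least_elem Q r q0"
    and a: "a \<in> Z" and b: "b \<in> Z" and c: "c \<in> Z" and z: "d a b = q0"
  shows "d a c = d b c"
proof -
  have Q: "d a c \<in> Q" "d b c \<in> Q" using pu a b c unfolding pseudoultrametric_def by auto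
  have l1: "(q0, d a c) \<in> r" "(q0, d b c) \<in> r" using le Q unfolding least_elem_def by auto
  show ?thesis using tri[OF pu a b c] l1 z antisymD[OF an] by metis
qed

lemma pu_u:
  assumes pu: "pseudoultrametric Q r q0 Z d" and rf: "refl_on Q r"
    and a: "a \<in> Z" and b: "b \<in> Z" and c: "c \<in> Z" and e: "d a b = d b c"
  shows "(d a c, d a b) \<in> r"
proof -
  have Q: "d a c \<in> Q" "d a b \<in> Q" using pu a b c unfolding pseudoultrametric_def by auto
  have l1: "(d a c, d a c) \<in> r" "(d a b, d a b) \<in> r" using rf Q unfolding refl_on_def by auto
  show ?thesis using tri[OF pu a b c] l1 e by metis
qed

lemma pu_mono:
  assumes "pseudoultrametric Q r q0 Z d" "r \<subseteq> r'"
  shows "pseudoultrametric Q r' q0 Z d"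
  using assms unfolding pseudoultrametric_def Let_def by blast

lemma szpilrajn:
  assumes "partial_order_on A p"
  shows "\<exists>r. linear_order_on A r \<and> p \<subseteq> r"
proof -
  let ?S = "{r. partial_order_on A r \<and> p \<subseteq> r}"
  have "\<exists>M\<in>?S. \<forall>X\<in>?S. M \<subseteq> X \<longrightarrow> X = M"
  proof (rule subset_Zorn_nonempty)
    show "?S \<noteq> {}" using assms by blast
  next
    fix C assume C: "C \<noteq> {}" "subset.chain ?S C"
    have sub: "C \<subseteq> ?S" and ch: "\<forall>X\<in>C. \<forall>Y\<in>C. X \<subseteq> Y \<or> Y \<subseteq> X"
      using C(2) unfolding subset_chain_def by auto
    obtain r0 where r0: "r0 \<in> C" using C(1) by blast
    have A: "\<Union>C \<subseteq> A \<times> A" using sub unfolding partial_order_on_def preorder_on_def by blast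
    have R: "refl_on A (\<Union>C)" using sub r0 unfolding partial_order_on_def preorder_on_def refl_on_def by blast
    have T: "trans (\<Union>C)"
    proof (rule transI)
      fix x y z assume "(x, y) \<in> \<Union>C" "(y, z) \<in> \<Union>C"
      then obtain r1 r2 where r1: "r1 \<in> C" "(x,y) \<in> r1" and r2: "r2 \<in> C" "(y,z) \<in> r2" by blast
      show "(x, z) \<in> \<Union>C"
      proof (cases "r1 \<subseteq> r2")
        case True
        then have "trans r2" using sub r2 unfolding partial_order_on_def preorder_on_def by blast
        then show ?thesis using True r1 r2 by (meson UnionI subsetD transD)
      next
        case False
        then have "r2 \<subseteq> r1" using ch r1 r2 by blast
        moreover have "trans r1" using sub r1 unfolding partial_order_on_def preorder_on_def by blast
        ultimately show ?thesis using r1 r2 by (meson UnionI subsetD transD)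
      qed
    qed
    have N: "antisym (\<Union>C)"
    proof (rule antisymI)
      fix x y assume "(x, y) \<in> \<Union>C" "(y, x) \<in> \<Union>C"
      then obtain r1 r2 where r1: "r1 \<in> C" "(x,y) \<in> r1" and r2: "r2 \<in> C" "(y,x) \<in> r2" by blast
      show "x = y"
      proof (cases "r1 \<subseteq> r2")
        case True
        then have "antisym r2" using sub r2 unfolding partial_order_on_def preorder_on_def by blast
        then show ?thesis using True r1 r2 by (meson subsetD antisymD)
      next
        case False
        then have "r2 \<subseteq> r1" using ch r1 r2 by blast
        moreover have "antisym r1" using sub r1 unfolding partial_order_on_def preorder_on_def by blast
        ultimately show ?thesis using r1 r2 by (meson subsetD antisymD)
      qed
    qed
    have P: "p \<subseteq> \<Union>C" using sub r0 by blast
    show "\<Union>C \<in> ?S" using A R T N P unfolding partial_order_on_def preorder_on_def by blast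
  qed
  then obtain M where M: "partial_order_on A M" "p \<subseteq> M" and max: "\<forall>X\<in>?S. M \<subseteq> X \<longrightarrow> X = M"
    by blast
  have MA: "M \<subseteq> A \<times> A" and Mr: "refl_on A M" and Mt: "trans M" and Ma: "antisym M"
    using M(1) unfolding partial_order_on_def preorder_on_def by auto
  have tr: "\<And>x y z. (x,y)\<in>M \<Longrightarrow> (y,z)\<in>M \<Longrightarrow> (x,z)\<in>M" using Mt by (meson transD)
  have an: "\<And>x y. (x,y)\<in>M \<Longrightarrow> (y,x)\<in>M \<Longrightarrow> x = y" using Ma by (meson antisymD)
  have "total_on A M"
    unfolding total_on_def
  proof (intro ballI impI)
    fix a b assume a: "a \<in> A" and b: "b \<in> A" and ab: "a \<noteq> b"
    show "(a, b) \<in> M \<or> (b, a) \<in> M"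
    proof (rule ccontr)
      assume nab: "\<not> ((a, b) \<in> M \<or> (b, a) \<in> M)"
      define M' where "M' = M \<union> {(x,y). (x,a)\<in>M \<and> (b,y)\<in>M}"
      have aa: "(a,a) \<in> M" and bb: "(b,b) \<in> M" using Mr a b unfolding refl_on_def by auto
      have 1: "M' \<subseteq> A \<times> A" using MA unfolding M'_def by blast
      have 2: "refl_on A M'" using Mr unfolding M'_def refl_on_def by blast
      have 3: "trans M'"
      proof (rule transI)
        fix x y z assume xy: "(x, y) \<in> M'" and yz: "(y, z) \<in> M'"
        show "(x, z) \<in> M'" using xy yz nab tr unfolding M'_def by blast
      qed
      have 4: "antisym M'"
      proof (rule antisymI)
        fix x y assume xy: "(x, y) \<in> M'" and yx: "(y, x) \<in> M'"
        show "x = y" using xy yx nab tr an unfolding M'_def by blast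
      qed
      have "M' \<in> ?S" using 1 2 3 4 M(2) unfolding M'_def partial_order_on_def preorder_on_def by blast
      moreover have "M \<subseteq> M'" unfolding M'_def by blast
      ultimately have "M' = M" using max by blast
      moreover have "(a,b) \<in> M'" using aa bb unfolding M'_def by blast
      ultimately show False using nab by blast
    qed
  qed
  then show ?thesis using M unfolding linear_order_on_def by blast
qed


lemma pu_trip:
  assumes pu: "pseudoultrametric Q r q0 Z d" and z: "z1 \<in> Z" "z2 \<in> Z" "z3 \<in> Z"
  obtains i1 i2 i3 where "perm3 i1 i2 i3"
    "(d ([z1,z2,z3]!i1) ([z1,z2,z3]!i3), d ([z1,z2,z3]!i1) ([z1,z2,z3]!i2)) \<in> r"
    "d ([z1,z2,z3]!i1) ([z1,z2,z3]!i2) = d ([z1,z2,z3]!i2) ([z1,z2,z3]!i3)"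
proof -
  have "\<forall>z1\<in>Z. \<forall>z2\<in>Z. \<forall>z3\<in>Z. \<exists>i1 i2 i3. perm3 i1 i2 i3 \<and>
    (d ([z1,z2,z3]!i1) ([z1,z2,z3]!i3), d ([z1,z2,z3]!i1) ([z1,z2,z3]!i2)) \<in> r \<and>
    d ([z1,z2,z3]!i1) ([z1,z2,z3]!i2) = d ([z1,z2,z3]!i2) ([z1,z2,z3]!i3)"
    using pu unfolding pseudoultrametric_def Let_def by (elim conjE)
  from this[rule_format, OF z] that show thesis by blast
qed

lemma iii_trip:
  assumes t: "\<forall>x1\<in>X. \<forall>x2\<in>X. \<forall>x3\<in>X. let x = (\<lambda>i. [x1, x2, x3] ! i) in
        \<exists>i1 i2 i3. perm3 i1 i2 i3 \<and> \<Phi> (x i1) (x i2) = \<Phi> (x i2) (x i3)"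
    and x: "x1 \<in> X" "x2 \<in> X" "x3 \<in> X"
  obtains i1 i2 i3 where "perm3 i1 i2 i3"
    "\<Phi> ([x1,x2,x3]!i1) ([x1,x2,x3]!i2) = \<Phi> ([x1,x2,x3]!i2) ([x1,x2,x3]!i3)"
proof -
  have "\<forall>x1\<in>X. \<forall>x2\<in>X. \<forall>x3\<in>X. \<exists>i1 i2 i3. perm3 i1 i2 i3 \<and>
     \<Phi> ([x1,x2,x3]!i1) ([x1,x2,x3]!i2) = \<Phi> ([x1,x2,x3]!i2) ([x1,x2,x3]!i3)"
    using t unfolding Let_def .
  from this[rule_format, OF x] that show thesis by blast
qed

lemma u_relI:
  assumes "x1 \<in> X" "x2 \<in> X" "x3 \<in> X" "\<Phi> x1 x2 = \<Phi> x2 x3"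
  shows "(\<Phi> x1 x3, \<Phi> x1 x2) \<in> u_rel X \<Phi>"
proof -
  have "\<Phi> x1 x3 \<in> range2 X \<Phi>" "\<Phi> x1 x2 \<in> range2 X \<Phi>" using assms unfolding range2_def by blast+
  then show ?thesis unfolding u_rel_def using assms by blast
qed

lemma ii_iii:
  assumes "cond_ii X \<Phi> Y d Q r q0" and Xne: "X \<noteq> {}"
  shows "cond_iii X \<Phi>"
proof -
  obtain f g where po: "partial_order_on Q r" and le: "least_elem Q r q0"
    and pu: "pseudoultrametric Q r q0 Y d" and bf: "bij_betw f (range2 X \<Phi>) (range2 Y d)"
    and bg: "bij_betw g Y X" and rel: "\<forall>x\<in>Y. \<forall>y\<in>Y. d x y = f (\<Phi> (g x) (g y))"
    using assms(1) unfolding cond_ii_def comb_similar_def by blast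
  have surjg: "\<exists>z\<in>Y. g z = x" if "x \<in> X" for x
    using bg that unfolding bij_betw_def by blast
  have gY: "g z \<in> X" if "z \<in> Y" for z using bg that by (meson bij_betw_apply)
  have injf: "inj_on f (range2 X \<Phi>)" using bf unfolding bij_betw_def by blast
  have inR: "\<Phi> x y \<in> range2 X \<Phi>" if "x \<in> X" "y \<in> X" for x y
    using that unfolding range2_def by blast
  have relz: "d z1 z2 = f (\<Phi> (g z1) (g z2))" if "z1 \<in> Y" "z2 \<in> Y" for z1 z2
    using rel that by blast
  have E: "\<Phi> (g z1) (g z2) = \<Phi> (g z3) (g z4) \<longleftrightarrow> d z1 z2 = d z3 z4"
    if z: "z1 \<in> Y" "z2 \<in> Y" "z3 \<in> Y" "z4 \<in> Y" for z1 z2 z3 z4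
  proof -
    have m: "\<Phi> (g z1) (g z2) \<in> range2 X \<Phi>" "\<Phi> (g z3) (g z4) \<in> range2 X \<Phi>"
      using inR gY z by blast+
    show ?thesis using inj_on_eq_iff[OF injf m] relz[OF z(1,2)] relz[OF z(3,4)] by simp
  qed
  have symd: "d x y = d y x" if "x \<in> Y" "y \<in> Y" for x y
    using pu that unfolding pseudoultrametric_def by blast
  have dzz: "d z z = q0" if "z \<in> Y" for z
    using pu that unfolding pseudoultrametric_def by blast
  have rf: "refl_on Q r" and rt: "trans r" and ra: "antisym r"
    using po unfolding partial_order_on_def preorder_on_def by auto
  have symP: "\<forall>x\<in>X. \<forall>y\<in>X. \<Phi> x y = \<Phi> y x"
  proof (intro ballI)
    fix x y assume x: "x \<in> X" and y: "y \<in> X"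
    obtain z1 where z1: "z1 \<in> Y" "g z1 = x" using surjg[OF x] by blast
    obtain z2 where z2: "z2 \<in> Y" "g z2 = y" using surjg[OF y] by blast
    have "\<Phi> (g z1) (g z2) = \<Phi> (g z2) (g z1)" using E[OF z1(1) z2(1) z2(1) z1(1)] symd[OF z1(1) z2(1)] by simp
    then show "\<Phi> x y = \<Phi> y x" using z1 z2 by simp
  qed
  define r' where "r' = {(a,b). a \<in> range2 X \<Phi> \<and> b \<in> range2 X \<Phi> \<and> (f a, f b) \<in> r}"
  have u: "u_rel X \<Phi> \<subseteq> r'"
  proof
    fix p assume "p \<in> u_rel X \<Phi>"
    then obtain y1 y2 x1 x2 x3 where p: "p = (y1, y2)" and R: "y1 \<in> range2 X \<Phi>" "y2 \<in> range2 X \<Phi>"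
      and x: "x1 \<in> X" "x2 \<in> X" "x3 \<in> X" and y: "y1 = \<Phi> x1 x3" "y2 = \<Phi> x1 x2"
      and e: "\<Phi> x1 x2 = \<Phi> x2 x3"
      unfolding u_rel_def by blast
    obtain z1 where z1: "z1 \<in> Y" "g z1 = x1" using surjg[OF x(1)] by blast
    obtain z2 where z2: "z2 \<in> Y" "g z2 = x2" using surjg[OF x(2)] by blast
    obtain z3 where z3: "z3 \<in> Y" "g z3 = x3" using surjg[OF x(3)] by blast
    have "d z1 z2 = d z2 z3" using E[OF z1(1) z2(1) z2(1) z3(1)] e z1 z2 z3 by simp
    then have "(d z1 z3, d z1 z2) \<in> r" using pu_u[OF pu rf z1(1) z2(1) z3(1)] by blast
    moreover have "f y1 = d z1 z3" "f y2 = d z1 z2"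
      using y relz[OF z1(1) z3(1)] relz[OF z1(1) z2(1)] z1 z2 z3 by simp_all
    ultimately show "p \<in> r'" using p R unfolding r'_def by simp
  qed
  have tr': "trans r'"
  proof (rule transI)
    fix a b c assume "(a, b) \<in> r'" "(b, c) \<in> r'"
    then show "(a, c) \<in> r'" unfolding r'_def using transD[OF rt] by blast
  qed
  have an': "antisym r'"
  proof (rule antisymI)
    fix a b assume ab: "(a, b) \<in> r'" and ba: "(b, a) \<in> r'"
    then have "f a = f b" unfolding r'_def using antisymD[OF ra] by blast
    moreover have "a \<in> range2 X \<Phi>" "b \<in> range2 X \<Phi>" using ab unfolding r'_def by blast+
    ultimately show "a = b" using injf by (simp add: inj_on_eq_iff)
  qed
  have anti: "antisym ((u_rel X \<Phi>)\<^sup>+)"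
  proof -
    have "(u_rel X \<Phi>)\<^sup>+ \<subseteq> r'\<^sup>+" using u by (rule trancl_mono_subset)
    also have "r'\<^sup>+ = r'" using tr' by simp
    finally show ?thesis using an' by (rule antisym_subset)
  qed
  obtain x0 where x0: "x0 \<in> X" using Xne by blast
  obtain z0 where z0: "z0 \<in> Y" "g z0 = x0" using surjg x0 by blast
  define a0 where "a0 = \<Phi> x0 x0"
  have a0R: "a0 \<in> range2 X \<Phi>" using inR x0 unfolding a0_def by blast
  have A0: "\<Phi> (g z1) (g z2) = a0 \<longleftrightarrow> d z1 z2 = q0" if "z1 \<in> Y" "z2 \<in> Y" for z1 z2
    using E[OF that z0(1) z0(1)] dzz[OF z0(1)] z0 unfolding a0_def by simp
  have coh: "coherent X \<Phi> a0"
    unfolding coherent_def Let_def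
  proof
    let ?R = "{(x, y). x \<in> X \<and> y \<in> X \<and> \<Phi> x y = a0}"
    show "equiv X ?R"
    proof (rule equivI)
      show "?R \<subseteq> X \<times> X" by blast
      show "refl_on X ?R" unfolding refl_on_def
      proof
        fix x assume x: "x \<in> X"
        then obtain z where z: "z \<in> Y" "g z = x" using surjg by blast
        have "\<Phi> (g z) (g z) = a0" using A0[OF z(1) z(1)] dzz[OF z(1)] by simp
        then show "(x, x) \<in> ?R" using z x by simp
      qed
      show "sym ?R" using symP by (auto intro: symI)
      show "trans ?R"
      proof (rule transI)
        fix x y w assume "(x, y) \<in> ?R" "(y, w) \<in> ?R"
        then have x: "x \<in> X" "y \<in> X" "w \<in> X" and e: "\<Phi> x y = a0" "\<Phi> y w = a0" by auto
        obtain z1 where z1: "z1 \<in> Y" "g z1 = x" using surjg[OF x(1)] by blast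
        obtain z2 where z2: "z2 \<in> Y" "g z2 = y" using surjg[OF x(2)] by blast
        obtain z3 where z3: "z3 \<in> Y" "g z3 = w" using surjg[OF x(3)] by blast
        have q: "d z1 z2 = q0" "d z2 z3 = q0"
          using A0[OF z1(1) z2(1)] A0[OF z2(1) z3(1)] z1 z2 z3 e by simp_all
        then have "d z2 z1 = q0" using symd[OF z1(1) z2(1)] by simp
        then have "d z2 z3 = d z1 z3" using pu_zero[OF pu ra le z2(1) z1(1) z3(1)] by blast
        then have "d z1 z3 = q0" using q by simp
        then have "\<Phi> x w = a0" using A0[OF z1(1) z3(1)] z1 z3 by simp
        then show "(x, w) \<in> ?R" using x by simp
      qed
    qed
    show "strongly_consistent X \<Phi> ?R"
      unfolding strongly_consistent_def
    proof (intro allI impI)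
      fix x1 x2 x3 x4 assume "(x1, x2) \<in> ?R" "(x3, x4) \<in> ?R"
      then have x: "x1 \<in> X" "x2 \<in> X" "x3 \<in> X" "x4 \<in> X" and e: "\<Phi> x1 x2 = a0" "\<Phi> x3 x4 = a0" by auto
      obtain z1 where z1: "z1 \<in> Y" "g z1 = x1" using surjg[OF x(1)] by blast
      obtain z2 where z2: "z2 \<in> Y" "g z2 = x2" using surjg[OF x(2)] by blast
      obtain z3 where z3: "z3 \<in> Y" "g z3 = x3" using surjg[OF x(3)] by blast
      obtain z4 where z4: "z4 \<in> Y" "g z4 = x4" using surjg[OF x(4)] by blast
      have q: "d z1 z2 = q0" "d z3 z4 = q0"
        using A0[OF z1(1) z2(1)] A0[OF z3(1) z4(1)] z1 z2 z3 z4 e by simp_all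
      have "d z1 z3 = d z2 z3" using pu_zero[OF pu ra le z1(1) z2(1) z3(1) q(1)] .
      moreover have "d z3 z2 = d z4 z2" using pu_zero[OF pu ra le z3(1) z4(1) z2(1) q(2)] .
      ultimately have "d z1 z3 = d z2 z4" using symd[OF z2(1) z3(1)] symd[OF z2(1) z4(1)] by simp
      then have "\<Phi> (g z1) (g z3) = \<Phi> (g z2) (g z4)" using E[OF z1(1) z3(1) z2(1) z4(1)] by simp
      then show "\<Phi> x1 x3 = \<Phi> x2 x4" using z1 z2 z3 z4 by simp
    qed
  qed
  have trip: "\<forall>x1\<in>X. \<forall>x2\<in>X. \<forall>x3\<in>X. let x = (\<lambda>i. [x1, x2, x3] ! i) in
        \<exists>i1 i2 i3. perm3 i1 i2 i3 \<and> \<Phi> (x i1) (x i2) = \<Phi> (x i2) (x i3)"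
    unfolding Let_def
  proof (intro ballI)
    fix x1 x2 x3 assume x: "x1 \<in> X" "x2 \<in> X" "x3 \<in> X"
    obtain z1 where z1: "z1 \<in> Y" "g z1 = x1" using surjg[OF x(1)] by blast
    obtain z2 where z2: "z2 \<in> Y" "g z2 = x2" using surjg[OF x(2)] by blast
    obtain z3 where z3: "z3 \<in> Y" "g z3 = x3" using surjg[OF x(3)] by blast
    obtain i1 i2 i3 where p: "perm3 i1 i2 i3"
      and e: "d ([z1,z2,z3] ! i1) ([z1,z2,z3] ! i2) = d ([z1,z2,z3] ! i2) ([z1,z2,z3] ! i3)"
      using pu_trip[OF pu z1(1) z2(1) z3(1)] by blast
    have lt: "i1 < 3" "i2 < 3" "i3 < 3" using perm3_lt[OF p] by auto
    have inY: "[z1,z2,z3] ! i \<in> Y" if "i < 3" for i using nth3_in[of i z1 z2 z3, OF that] z1(1) z2(1) z3(1) by auto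
    have gm: "[x1,x2,x3] ! i = g ([z1,z2,z3] ! i)" if "i < 3" for i
      using nth_map[of i "[z1,z2,z3]" g] that z1 z2 z3 by simp
    have "\<Phi> (g ([z1,z2,z3] ! i1)) (g ([z1,z2,z3] ! i2)) = \<Phi> (g ([z1,z2,z3] ! i2)) (g ([z1,z2,z3] ! i3))"
      using E[OF inY[OF lt(1)] inY[OF lt(2)] inY[OF lt(2)] inY[OF lt(3)]] e by blast
    then have "\<Phi> ([x1,x2,x3] ! i1) ([x1,x2,x3] ! i2) = \<Phi> ([x1,x2,x3] ! i2) ([x1,x2,x3] ! i3)"
      by (simp only: gm[OF lt(1)] gm[OF lt(2)] gm[OF lt(3)])
    then show "\<exists>i1 i2 i3. perm3 i1 i2 i3 \<and>
      \<Phi> ([x1,x2,x3] ! i1) ([x1,x2,x3] ! i2) = \<Phi> ([x1,x2,x3] ! i2) ([x1,x2,x3] ! i3)"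
      using p by blast
  qed
  show ?thesis unfolding cond_iii_def
    by (rule conjI[OF symP conjI[OF anti conjI[OF bexI[where P="coherent X \<Phi>", OF coh a0R] trip]]])
qed


lemma iii_iv:
  assumes "cond_iii X \<Phi>"
  shows "cond_iv X \<Phi>"
proof -
  obtain a0 where symP: "\<forall>x\<in>X. \<forall>y\<in>X. \<Phi> x y = \<Phi> y x" and anti: "antisym ((u_rel X \<Phi>)\<^sup>+)"
    and a0R: "a0 \<in> range2 X \<Phi>" and coh: "coherent X \<Phi> a0"
    and trip: "\<forall>x1\<in>X. \<forall>x2\<in>X. \<forall>x3\<in>X. let x = (\<lambda>i. [x1, x2, x3] ! i) in
        \<exists>i1 i2 i3. perm3 i1 i2 i3 \<and> \<Phi> (x i1) (x i2) = \<Phi> (x i2) (x i3)"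
    using assms unfolding cond_iii_def by blast
  let ?R2 = "range2 X \<Phi>"
  have eq: "equiv X {(x, y). x \<in> X \<and> y \<in> X \<and> \<Phi> x y = a0}"
    using coh unfolding coherent_def Let_def by blast
  have rfl: "refl_on X {(x, y). x \<in> X \<and> y \<in> X \<and> \<Phi> x y = a0}"
    using eq unfolding equiv_def by blast
  have diag: "\<forall>x\<in>X. \<Phi> x x = a0"
  proof
    fix x assume "x \<in> X"
    then have "(x, x) \<in> {(x, y). x \<in> X \<and> y \<in> X \<and> \<Phi> x y = a0}" using rfl unfolding refl_on_def by blast
    then show "\<Phi> x x = a0" by simp
  qed
  have inR: "\<Phi> x y \<in> ?R2" if "x \<in> X" "y \<in> X" for x y
    using that unfolding range2_def by blast
  have uR: "u_rel X \<Phi> \<subseteq> ?R2 \<times> ?R2" unfolding u_rel_def by blast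
  have tR: "(u_rel X \<Phi>)\<^sup>+ \<subseteq> ?R2 \<times> ?R2" using trancl_subset_Sigma[OF uR] .
  have po: "partial_order_on ?R2 (le_Phi X \<Phi>)"
    unfolding partial_order_on_def preorder_on_def
  proof (intro conjI)
    show "le_Phi X \<Phi> \<subseteq> ?R2 \<times> ?R2" unfolding le_Phi_def using tR by auto
    show "refl_on ?R2 (le_Phi X \<Phi>)" unfolding le_Phi_def refl_on_def by auto
    show "trans (le_Phi X \<Phi>)"
    proof (rule transI)
      fix x y z assume "(x, y) \<in> le_Phi X \<Phi>" "(y, z) \<in> le_Phi X \<Phi>"
      then show "(x, z) \<in> le_Phi X \<Phi>" unfolding le_Phi_def by (auto intro: trancl_trans)
    qed
    show "antisym (le_Phi X \<Phi>)"
    proof (rule antisymI)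
      fix x y assume "(x, y) \<in> le_Phi X \<Phi>" "(y, x) \<in> le_Phi X \<Phi>"
      then show "x = y" unfolding le_Phi_def using antisymD[OF anti] by auto
    qed
  qed
  have least: "least_elem ?R2 (le_Phi X \<Phi>) a0"
    unfolding least_elem_def
  proof (intro conjI ballI)
    show "a0 \<in> ?R2" by (rule a0R)
    fix q assume "q \<in> ?R2"
    then obtain x y where xy: "x \<in> X" "y \<in> X" "q = \<Phi> x y" unfolding range2_def by blast
    have "\<Phi> x y = \<Phi> y x" using symP xy(1,2) by blast
    then have "(\<Phi> x x, \<Phi> x y) \<in> u_rel X \<Phi>" using u_relI[OF xy(1) xy(2) xy(1)] by blast
    then have "(a0, q) \<in> u_rel X \<Phi>" using diag xy by simp
    then show "(a0, q) \<in> le_Phi X \<Phi>" unfolding le_Phi_def by auto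
  qed
  have pu: "pseudoultrametric ?R2 (le_Phi X \<Phi>) a0 X \<Phi>"
    unfolding pseudoultrametric_def
  proof (intro conjI)
    show "\<forall>x\<in>X. \<forall>y\<in>X. \<Phi> x y \<in> ?R2" using inR by blast
    show "\<forall>x\<in>X. \<forall>y\<in>X. \<Phi> x y = \<Phi> y x" by (rule symP)
    show "\<forall>z\<in>X. \<Phi> z z = a0" by (rule diag)
    show "\<forall>z1\<in>X. \<forall>z2\<in>X. \<forall>z3\<in>X. let z = (\<lambda>i. [z1, z2, z3] ! i) in
        \<exists>i1 i2 i3. perm3 i1 i2 i3 \<and>
          ((\<Phi> (z i1) (z i3), \<Phi> (z i1) (z i2)) \<in> le_Phi X \<Phi>) \<and>
          \<Phi> (z i1) (z i2) = \<Phi> (z i2) (z i3)"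
      unfolding Let_def
    proof (intro ballI)
      fix x1 x2 x3 assume x: "x1 \<in> X" "x2 \<in> X" "x3 \<in> X"
      obtain i1 i2 i3 where p: "perm3 i1 i2 i3"
        and e: "\<Phi> ([x1,x2,x3] ! i1) ([x1,x2,x3] ! i2) = \<Phi> ([x1,x2,x3] ! i2) ([x1,x2,x3] ! i3)"
        using iii_trip[OF trip x] by blast
      have lt: "i1 < 3" "i2 < 3" "i3 < 3" using perm3_lt[OF p] by auto
      have inX: "[x1,x2,x3] ! i \<in> X" if "i < 3" for i using nth3_in[of i x1 x2 x3, OF that] x by auto
      have "(\<Phi> ([x1,x2,x3] ! i1) ([x1,x2,x3] ! i3), \<Phi> ([x1,x2,x3] ! i1) ([x1,x2,x3] ! i2)) \<in> u_rel X \<Phi>"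
        by (rule u_relI[OF inX[OF lt(1)] inX[OF lt(2)] inX[OF lt(3)] e])
      then have "(\<Phi> ([x1,x2,x3] ! i1) ([x1,x2,x3] ! i3), \<Phi> ([x1,x2,x3] ! i1) ([x1,x2,x3] ! i2)) \<in> le_Phi X \<Phi>"
        unfolding le_Phi_def by (rule UnI1[OF r_into_trancl'])
      then show "\<exists>i1 i2 i3. perm3 i1 i2 i3 \<and>
          ((\<Phi> ([x1,x2,x3] ! i1) ([x1,x2,x3] ! i3), \<Phi> ([x1,x2,x3] ! i1) ([x1,x2,x3] ! i2)) \<in> le_Phi X \<Phi>) \<and>
          \<Phi> ([x1,x2,x3] ! i1) ([x1,x2,x3] ! i2) = \<Phi> ([x1,x2,x3] ! i2) ([x1,x2,x3] ! i3)"
        using p e by blast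
    qed
  qed
  have c: "(\<forall>x\<in>X. \<Phi> x x = a0) \<and> partial_order_on ?R2 (le_Phi X \<Phi>) \<and>
        least_elem ?R2 (le_Phi X \<Phi>) a0 \<and> pseudoultrametric ?R2 (le_Phi X \<Phi>) a0 X \<Phi>"
    by (rule conjI[OF diag conjI[OF po conjI[OF least pu]]])
  show ?thesis unfolding cond_iv_def using c a0R by blast
qed
lemma comb_id: "comb_similar X \<Phi> X \<Phi>"
  unfolding comb_similar_def by (rule exI[of _ id], rule exI[of _ id]) simp

lemma iv_ii:
  assumes "cond_iv X \<Phi>"
  shows "\<exists>b0. cond_ii X \<Phi> X \<Phi> (range2 X \<Phi>) (le_Phi X \<Phi>) b0"
  using assms comb_id unfolding cond_iv_def cond_ii_def by blast

lemma iv_i: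
  assumes "cond_iv X \<Phi>"
  shows "\<exists>r b0. cond_i X \<Phi> X \<Phi> (range2 X \<Phi>) r b0"
proof -
  obtain b0 where po: "partial_order_on (range2 X \<Phi>) (le_Phi X \<Phi>)"
    and le: "least_elem (range2 X \<Phi>) (le_Phi X \<Phi>) b0"
    and pu: "pseudoultrametric (range2 X \<Phi>) (le_Phi X \<Phi>) b0 X \<Phi>"
    using assms unfolding cond_iv_def by blast
  obtain r where r: "linear_order_on (range2 X \<Phi>) r" "le_Phi X \<Phi> \<subseteq> r"
    using szpilrajn[OF po] by blast
  have "least_elem (range2 X \<Phi>) r b0" using le r(2) unfolding least_elem_def by blast
  moreover have "pseudoultrametric (range2 X \<Phi>) r b0 X \<Phi>" using pu_mono[OF pu r(2)] .
  ultimately show ?thesis using r(1) comb_id unfolding cond_i_def by blast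
qed

theorem theorem3p18:
  fixes X :: "'a set" and \<Phi> :: "'a \<Rightarrow> 'a \<Rightarrow> 'b"
    and Y' :: "'c set" and d' :: "'c \<Rightarrow> 'c \<Rightarrow> 'd" and Q' :: "'d set"
    and r' :: "('d \<times> 'd) set" and q0' :: 'd
  assumes "X \<noteq> {}"
  shows "((\<exists>(Y :: 'a set) (d :: 'a \<Rightarrow> 'a \<Rightarrow> 'b) Q r q0. cond_i X \<Phi> Y d Q r q0)
            \<longleftrightarrow> (\<exists>(Y :: 'a set) (d :: 'a \<Rightarrow> 'a \<Rightarrow> 'b) Q r q0. cond_ii X \<Phi> Y d Q r q0))
       \<and> ((\<exists>(Y :: 'a set) (d :: 'a \<Rightarrow> 'a \<Rightarrow> 'b) Q r q0. cond_ii X \<Phi> Y d Q r q0)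
            \<longleftrightarrow> cond_iii X \<Phi>)
       \<and> (cond_iii X \<Phi> \<longleftrightarrow> cond_iv X \<Phi>)
       \<and> (cond_ii X \<Phi> Y' d' Q' r' q0' \<longrightarrow> cond_iii X \<Phi>)"
proof -
  have i_ii: "cond_ii X \<Phi> Y d Q r q0" if "cond_i X \<Phi> Y d Q r q0"
    for Y :: "'a set" and d :: "'a \<Rightarrow> 'a \<Rightarrow> 'b" and Q r q0
    using that unfolding cond_i_def cond_ii_def linear_order_on_def by blast
  have A: "(\<exists>(Y :: 'a set) (d :: 'a \<Rightarrow> 'a \<Rightarrow> 'b) Q r q0. cond_ii X \<Phi> Y d Q r q0) \<Longrightarrow> cond_iii X \<Phi>"
    by (elim exE) (erule ii_iii[OF _ assms])
  have B: "cond_iii X \<Phi> \<Longrightarrow> \<exists>(Y :: 'a set) (d :: 'a \<Rightarrow> 'a \<Rightarrow> 'b) Q r q0. cond_i X \<Phi> Y d Q r q0"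
    using iv_i iii_iv by blast
  have C: "cond_iv X \<Phi> \<Longrightarrow> cond_iii X \<Phi>"
    using iv_ii by (blast intro: ii_iii[OF _ assms])
  have D: "cond_ii X \<Phi> Y' d' Q' r' q0' \<Longrightarrow> cond_iii X \<Phi>" by (rule ii_iii[OF _ assms])
  show ?thesis using i_ii A B C D iii_iv by blast
qed


end
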